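(* Let $n\in\mathbb{N}$ and let $p$ be a prime with $p>3$ and $n>2$. Let $x_1,\dots,x_{p-3}$ be distinct symbols not in $\{1,\dots,n\}$, and regard $A_n$ as the subgroup of $A_{n+(p-3)}=\mathrm{Alt}(\{1,\dots,n,x_1,\dots,x_{p-3}\})$ fixing every $x_i$. If $\sigma\in A_n$, then $\sigma^{-1}$ can be written as a product of $p$-cycles $\sigma^{-1}=\tau_1\tau_2\cdots\tau_t$, where $\tau_i\in A_{n+(p-3)}\setminus A_n$ for all $i=1,\dots,t$, and $\tau_i\notin\langle\tau_j\rangle$ for all $i\neq j$.
   Context: $A_{n+(p-3)}\setminus A_n$ denotes the even permutations of $\{1,\dots,n,x_1,\dots,x_{p-3}\}$ that move at least one of the $x_i$. $\langle\tau\rangle$ denotes the cyclic subgroup generated by $\tau$. (The empty product is the identity.) *)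

theory Defs
  imports "HOL-Combinatorics.Combinatorics" "HOL-Computational_Algebra.Primes"
begin

definition alt :: "'a set \<Rightarrow> ('a \<Rightarrow> 'a) set" where
  "alt S = {\<sigma>. \<sigma> permutes S \<and> evenperm \<sigma>}"

definition is_k_cycle :: "nat \<Rightarrow> ('a \<Rightarrow> 'a) \<Rightarrow> bool" where
  "is_k_cycle k \<tau> \<longleftrightarrow> (\<exists>cs. distinct cs \<and> length cs = k \<and> \<tau> = cycle_of_list cs)"

definition cyc_gen :: "('a \<Rightarrow> 'a) \<Rightarrow> ('a \<Rightarrow> 'a) set" where
  "cyc_gen \<tau> = range (\<lambda>k::nat. \<tau> ^^ k)"

end

theory Submission
  imports Defs
begin

lemma evenperm_cycle:
  "distinct cs \<Longrightarrow> evenperm (cycle_of_list cs) = even (length cs - 1)"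
proof (induct cs rule: cycle_of_list.induct)
  case (1 i j cs)
  have "evenperm (cycle_of_list (i # j # cs)) = evenperm (transpose i j \<circ> cycle_of_list (j # cs))" by simp
  also have "\<dots> = (evenperm (transpose i j) = evenperm (cycle_of_list (j # cs)))"
    by (rule evenperm_comp) (auto simp: permutation_swap_id permutation_of_cycle)
  also have "\<dots> = even (length (i#j#cs) - 1)" using 1 by (simp add: evenperm_swap)
  finally show ?case .
qed (auto simp: evenperm_id)

lemma cycle_next:
  assumes "distinct cs" "i < length cs"
  shows "cycle_of_list cs (cs!i) = cs!(Suc i mod length cs)"
proof -
  have "map (cycle_of_list cs ^^ 1) cs ! i = rotate 1 cs ! i" by (simp only: cyclic_rotation[OF assms(1)])
  also have "\<dots> = cs!((1+i) mod length cs)" by (rule nth_rotate[OF assms(2)])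
  finally show ?thesis using assms(2) by simp
qed

lemma cycle_L1:
  assumes "distinct (us @ u # v # ws)"
  shows "cycle_of_list (us @ u # v # ws) u = v"
  using cycle_next[OF assms, of "length us"] by (simp add: nth_append)

lemma cycle_L2:
  assumes "distinct (u # ws @ [v])"
  shows "cycle_of_list (u # ws @ [v]) v = u"
  using cycle_next[OF assms, of "Suc (length ws)"] by (simp add: nth_append)

lemma cycle_pow_fix:
  assumes "distinct cs" "x \<in> set cs" "(cycle_of_list cs ^^ k) x = x"
  shows "cycle_of_list cs ^^ k = id"
proof -
  let ?t = "cycle_of_list cs"
  obtain i where i: "i < length cs" "x = cs!i" using assms(2) by (metis in_set_conv_nth)
  have r: "map (?t ^^ k) cs = rotate k cs" using cyclic_rotation[OF assms(1)] .
  hence "(?t ^^ k) (cs!i) = rotate k cs ! i" using i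
    by (metis nth_map)
  hence "cs ! ((k + i) mod length cs) = cs ! i" using i assms(3) by (simp add: nth_rotate)
  moreover have "length cs > 0" using i(1) by (cases cs) auto
  ultimately have "(k + i) mod length cs = i"
    using nth_eq_iff_index_eq[OF assms(1) mod_less_divisor i(1)] by simp
  hence "k mod length cs = 0" using i
    by (metis diff_add_inverse2 dvd_eq_mod_eq_0 le_add2 mod_eq_dvd_iff_nat mod_mod_trivial)
  hence "rotate k cs = cs" by (metis rotate_conv_mod rotate0 id_apply)
  hence m: "map (?t ^^ k) cs = cs" using r by simp
  have pp: "(?t ^^ k) permutes set cs" by (rule permutes_funpow[OF cycle_permutes])
  show ?thesis
  proof
    fix y show "(?t ^^ k) y = id y"
    proof (cases "y \<in> set cs")
      case True
      then obtain j where "j < length cs" "y = cs!j" by (metis in_set_conv_nth)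
      thus ?thesis using m by (metis id_apply nth_map)
    next
      case False thus ?thesis using pp by (simp add: permutes_def)
    qed
  qed
qed

lemma upt_split3:
  assumes "lo \<le> x" "Suc x < hi"
  shows "[lo..<hi] = [lo..<x] @ x # Suc x # [Suc (Suc x)..<hi]"
proof -
  have "[lo..<hi] = [lo..<x + (hi - x)]" using assms by simp
  also have "\<dots> = [lo..<x] @ [x..<x + (hi - x)]" by (rule upt_add_eq_append) (use assms in auto)
  also have "x + (hi - x) = hi" using assms by simp
  also have "[x..<hi] = x # Suc x # [Suc(Suc x)..<hi]" using assms by (simp add: upt_conv_Cons)
  finally show ?thesis .
qed


definition g3 :: "nat \<times> nat \<times> nat \<Rightarrow> nat \<Rightarrow> nat" where
  "g3 t = cycle_of_list [fst t, fst (snd t), snd (snd t)]"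

definition okt :: "nat \<Rightarrow> nat \<times> nat \<times> nat \<Rightarrow> bool" where
  "okt k t \<longleftrightarrow> distinct [fst t, fst (snd t), snd (snd t)] \<and> fst t \<in> {1..k} \<and> fst (snd t) \<in> {1..k} \<and> snd (snd t) \<in> {1..k}"

lemma transp12:
  assumes "\<sigma> permutes {1..2::nat}" "\<sigma> 2 = 1"
  shows "\<sigma> = transpose 1 2"
proof
  fix x
  have "\<sigma> 1 \<in> {1..2}" using permutes_in_image[OF assms(1), of 1] by simp
  moreover have "\<sigma> 1 \<noteq> 1"
  proof
    assume "\<sigma> 1 = 1"
    hence "\<sigma> 1 = \<sigma> 2" using assms(2) by simp
    hence "(1::nat) = 2" by (rule injD[OF permutes_inj[OF assms(1)]])
    thus False by simp
  qed
  ultimately have s1: "\<sigma> 1 = 2" by auto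
  show "\<sigma> x = transpose 1 2 x"
  proof (cases "x \<in> {1..2}")
    case True
    hence "x = 1 \<or> x = 2" by auto
    thus ?thesis using s1 assms(2) by auto
  next
    case False
    hence "x \<noteq> 1" "x \<noteq> 2" by auto
    thus ?thesis using False assms(1) by (simp add: permutes_def transpose_def)
  qed
qed

lemma decomp:
  "\<sigma> permutes {1..k} \<Longrightarrow> evenperm \<sigma> \<Longrightarrow>
   \<exists>trs. \<sigma> = foldr (\<circ>) (map g3 trs) id \<and> (\<forall>t\<in>set trs. okt k t) \<and> distinct (map (\<lambda>t. fst (snd t)) trs)"
proof (induct k arbitrary: \<sigma>)
  case 0
  hence "\<sigma> = id" by simp
  thus ?case by (intro exI[of _ "[]"]) simp
next
  case (Suc k)
  show ?case
  proof (cases "\<sigma> (Suc k) = Suc k")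
    case True
    have "\<sigma> permutes {1..k}"
      by (rule permutes_superset[OF Suc.prems(1)]) (use True in \<open>force simp: le_Suc_eq\<close>)
    then obtain trs where "\<sigma> = foldr (\<circ>) (map g3 trs) id" "\<forall>t\<in>set trs. okt k t"
      "distinct (map (\<lambda>t. fst (snd t)) trs)" using Suc.hyps Suc.prems(2) by blast
    moreover have "\<forall>t\<in>set trs. okt (Suc k) t" using calculation(2) by (auto simp: okt_def)
    ultimately show ?thesis by blast
  next
    case False
    define j where "j = \<sigma> (Suc k)"
    have jin: "j \<in> {1..Suc k}" unfolding j_def using permutes_in_image[OF Suc.prems(1), of "Suc k"] by simp
    hence j: "j \<in> {1..k}" using False j_def by auto
    have k2: "k \<ge> 2"
    proof (rule ccontr)
      assume "\<not> k \<ge> 2"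
      hence "k = 1" using j by auto
      hence sk: "Suc k = 2" and j1: "j = 1" using j by auto
      have "\<sigma> permutes {1..2}" using Suc.prems(1) sk by (simp only:)
      moreover have "\<sigma> 2 = 1" using j_def j1 sk by (simp only:)
      ultimately have "\<sigma> = transpose 1 2" by (rule transp12)
      thus False using Suc.prems(2) by (simp add: evenperm_swap)
    qed
    define l where "l = (if j = 1 then 2 else (1::nat))"
    have l: "l \<in> {1..k}" "l \<noteq> j" using k2 j by (auto simp: l_def)
    define g where "g = cycle_of_list [l, Suc k, j]"
    have dg: "distinct [l, Suc k, j]" using l j by auto
    have gk: "g (Suc k) = j" unfolding g_def using cycle_L1[of "[l]" "Suc k" j "[]"] dg by simp
    have gp: "g permutes {1..Suc k}" unfolding g_def
      by (rule permutes_subset[OF cycle_permutes]) (use l j in auto)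
    define \<sigma>' where "\<sigma>' = inv g \<circ> \<sigma>"
    have s'p: "\<sigma>' permutes {1..Suc k}" unfolding \<sigma>'_def
      by (rule permutes_compose[OF Suc.prems(1) permutes_inv[OF gp]])
    have s'k: "\<sigma>' (Suc k) = Suc k" unfolding \<sigma>'_def using gk j_def permutes_inv_eq[OF gp] by simp
    have s'p2: "\<sigma>' permutes {1..k}"
      by (rule permutes_superset[OF s'p]) (use s'k in \<open>force simp: le_Suc_eq\<close>)
    have permg: "permutation g" by (rule permutes_imp_permutation[OF finite_atLeastAtMost gp])
    have perms: "permutation \<sigma>" by (rule permutes_imp_permutation[OF finite_atLeastAtMost Suc.prems(1)])
    have eg: "evenperm g" unfolding g_def using evenperm_cycle[OF dg] by simp
    have "evenperm \<sigma>'" unfolding \<sigma>'_def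
      using evenperm_comp[OF permutation_inverse[OF permg] perms] evenperm_inv[OF permg] eg Suc.prems(2)
      by simp
    then obtain trs where trs: "\<sigma>' = foldr (\<circ>) (map g3 trs) id" "\<forall>t\<in>set trs. okt k t"
      "distinct (map (\<lambda>t. fst (snd t)) trs)" using Suc.hyps s'p2 by blast
    have sig: "\<sigma> = g \<circ> \<sigma>'" unfolding \<sigma>'_def by (simp add: o_assoc permutes_inv_o(1)[OF gp])
    have "Suc k \<notin> set (map (\<lambda>t. fst (snd t)) trs)" using trs(2) by (auto simp: okt_def)
    moreover have "okt (Suc k) (l, Suc k, j)" using l j dg by (auto simp: okt_def)
    moreover have g3g: "g3 (l, Suc k, j) = g" unfolding g3_def g_def by (simp only: fst_conv snd_conv)
    moreover have "\<sigma> = foldr (\<circ>) (map g3 ((l,Suc k,j)#trs)) id"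
      unfolding list.map foldr_Cons comp_apply g3g trs(1)[symmetric] using sig by (simp add: comp_def)
    moreover have "\<forall>t\<in>set ((l,Suc k,j)#trs). okt (Suc k) t"
      using trs(2) \<open>okt (Suc k) (l, Suc k, j)\<close> by (auto simp: okt_def)
    moreover have "distinct (map (\<lambda>t. fst (snd t)) ((l,Suc k,j)#trs))"
      using trs(3) \<open>Suc k \<notin> set (map (\<lambda>t. fst (snd t)) trs)\<close> by simp
    ultimately show ?thesis by blast
  qed
qed


context
  fixes n m a b c :: nat
  assumes m2: "2 \<le> m" and dabc: "distinct [a,b,c]"
    and ain: "a \<in> {1..n}" and bin: "b \<in> {1..n}" and cin: "c \<in> {1..n}"
begin

abbreviation "X \<equiv> [Suc n..<Suc (n+m)]"
abbreviation "CC \<equiv> cycle_of_list (a # c # b # X)"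
abbreviation "DD \<equiv> cycle_of_list (a # c # rev X @ [b])"

lemma dC: "distinct (a # c # b # X)" using dabc ain bin cin by auto
lemma dD: "distinct (a # c # rev X @ [b])" using dabc ain bin cin by auto

lemma C_next: assumes "Suc n \<le> x" "Suc x < Suc (n+m)" shows "CC x = Suc x"
proof -
  have eq: "a # c # b # X = (a # c # b # [Suc n..<x]) @ x # Suc x # [Suc (Suc x)..<Suc (n+m)]"
    using upt_split3[OF assms] by simp
  show ?thesis unfolding eq by (rule cycle_L1[OF dC[unfolded eq]])
qed

lemma D_prev: assumes "Suc n \<le> x" "Suc x < Suc (n+m)" shows "DD (Suc x) = x"
proof -
  have eq: "a # c # rev X @ [b] = (a # c # rev [Suc (Suc x)..<Suc (n+m)]) @ Suc x # x # (rev [Suc n..<x] @ [b])"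
    using upt_split3[OF assms] by simp
  show ?thesis unfolding eq by (rule cycle_L1[OF dD[unfolded eq]])
qed

lemma Xcons: "X = Suc n # [Suc (Suc n)..<Suc (n+m)]" using m2 by (simp add: upt_conv_Cons)
lemma Xsnoc: "X = [Suc n..<n+m] @ [n+m]" using m2 by (simp add: upt_Suc_append)

lemma C_b: "CC b = Suc n"
proof -
  have eq: "a # c # b # X = [a, c] @ b # Suc n # [Suc (Suc n)..<Suc (n+m)]"
    using Xcons by simp
  show ?thesis unfolding eq by (rule cycle_L1[OF dC[unfolded eq]])
qed

lemma C_xm: "CC (n+m) = a"
proof -
  have eq: "a # c # b # X = a # (c # b # [Suc n..<n+m]) @ [n+m]"
    using Xsnoc by simp
  show ?thesis unfolding eq by (rule cycle_L2[OF dC[unfolded eq]])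
qed

lemma C_a: "CC a = c"
  using cycle_L1[of "[]" a c "b # X"] dC by simp

lemma C_c: "CC c = b"
  using cycle_L1[of "[a]" c b "X"] dC by simp

lemma D_x1: "DD (Suc n) = b"
proof -
  have eq: "a # c # rev X @ [b] = (a # c # rev [Suc (Suc n)..<Suc (n+m)]) @ Suc n # b # []"
    using Xcons by simp
  show ?thesis unfolding eq by (rule cycle_L1[OF dD[unfolded eq]])
qed

lemma D_b: "DD b = a"
proof -
  have eq: "a # c # rev X @ [b] = a # (c # rev X) @ [b]" by simp
  show ?thesis unfolding eq by (rule cycle_L2[OF dD[unfolded eq]])
qed

lemma D_a: "DD a = c"
  using cycle_L1[of "[]" a c "rev X @ [b]"] dD by simp

lemma D_c: "DD c = n + m"
proof -
  have eq: "a # c # rev X @ [b] = [a] @ c # (n+m) # (rev [Suc n..<n+m] @ [b])"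
    using Xsnoc by simp
  show ?thesis unfolding eq by (rule cycle_L1[OF dD[unfolded eq]])
qed

lemma C_x1: "CC (Suc n) = Suc (Suc n)" using C_next[of "Suc n"] m2 by simp
lemma D_x2: "DD (Suc (Suc n)) = Suc n" using D_prev[of "Suc n"] m2 by simp

lemma g3_vals: "cycle_of_list [a,b,c] a = b" "cycle_of_list [a,b,c] b = c" "cycle_of_list [a,b,c] c = a"
  using cycle_L1[of "[]" a b "[c]"] cycle_L1[of "[a]" b c "[]"] cycle_L2[of a "[b]" c] dabc by simp_all

lemma CD: "CC \<circ> DD = cycle_of_list [a,b,c]"
proof
  fix x
  show "(CC \<circ> DD) x = cycle_of_list [a,b,c] x"
  proof -
    consider "x = a" | "x = b" | "x = c" | "x = Suc n" | "Suc (Suc n) \<le> x \<and> x \<le> n + m"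
      | "x \<notin> set (a # c # b # X)"
      by force
    thus ?thesis
    proof cases
      case 1 thus ?thesis using D_a C_c g3_vals by simp
    next
      case 2 thus ?thesis using D_b C_a g3_vals by simp
    next
      case 3 thus ?thesis using D_c C_xm g3_vals by simp
    next
      case 4
      have "cycle_of_list [a,b,c] x = x" by (rule id_outside_supp) (use 4 ain bin cin in auto)
      thus ?thesis using 4 D_x1 C_b by simp
    next
      case 5
      then obtain y where y: "x = Suc y" "Suc n \<le> y" "Suc y < Suc (n+m)" by (cases x) auto
      have "cycle_of_list [a,b,c] x = x" by (rule id_outside_supp) (use 5 ain bin cin in auto)
      thus ?thesis using D_prev[OF y(2,3)] C_next[OF y(2,3)] y(1) by simp
    next
      case 6
      have "DD x = x" by (rule id_outside_supp) (use 6 in auto)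
      moreover have "CC x = x" by (rule id_outside_supp) (use 6 in auto)
      moreover have "cycle_of_list [a,b,c] x = x" by (rule id_outside_supp) (use 6 in auto)
      ultimately show ?thesis by simp
    qed
  qed
qed

end


lemma P1:
  assumes "distinct cs" "x2 \<in> set cs" "y = cycle_of_list cs" "y x1 = x2" "\<tau> x1 = x2" "x1 \<noteq> x2"
    "\<tau> = y ^^ k"
  shows "\<tau> = y"
proof (cases k)
  case 0 thus ?thesis using assms(5,6,7) by simp
next
  case (Suc k')
  have e: "(y ^^ Suc k') x1 = (y ^^ k') (y x1)" by (simp only: funpow_Suc_right comp_apply)
  have "(y ^^ k') x2 = x2" using e assms(4,5,7) Suc by simp
  hence "(cycle_of_list cs ^^ k') x2 = x2" using assms(3) by simp
  hence "cycle_of_list cs ^^ k' = id" by (rule cycle_pow_fix[OF assms(1,2)])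
  hence "y ^^ k' = id" using assms(3) by simp
  thus ?thesis using assms(7) Suc by (simp only: funpow_Suc_right id_comp)
qed

lemma P2:
  assumes "distinct cs" "x1 \<in> set cs" "y = cycle_of_list cs" "y x2 = x1" "\<tau> x1 = x2"
    "\<tau> = y ^^ k"
  shows "y \<circ> \<tau> = id"
proof -
  have e: "y \<circ> \<tau> = y ^^ Suc k" using assms(6) by simp
  have "(y ^^ Suc k) x1 = x1" using assms(4,5) e[symmetric] by simp
  hence "(cycle_of_list cs ^^ Suc k) x1 = x1" using assms(3) by simp
  hence "cycle_of_list cs ^^ Suc k = id" by (rule cycle_pow_fix[OF assms(1,2)])
  thus ?thesis using e assms(3) by simp
qed

definition Cl :: "nat \<Rightarrow> nat \<Rightarrow> nat \<times> nat \<times> nat \<Rightarrow> nat list" where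
  "Cl n m t = fst t # snd (snd t) # fst (snd t) # [Suc n..<Suc (n+m)]"
definition Dl :: "nat \<Rightarrow> nat \<Rightarrow> nat \<times> nat \<times> nat \<Rightarrow> nat list" where
  "Dl n m t = fst t # snd (snd t) # rev [Suc n..<Suc (n+m)] @ [fst (snd t)]"

lemma CDprops:
  assumes "okt n t" "2 \<le> m"
  shows "distinct (Cl n m t)" "distinct (Dl n m t)" "length (Cl n m t) = m + 3" "length (Dl n m t) = m + 3"
    "set (Cl n m t) \<subseteq> {1..n+m}" "set (Dl n m t) \<subseteq> {1..n+m}"
    "Suc n \<in> set (Cl n m t)" "Suc (Suc n) \<in> set (Cl n m t)"
    "Suc n \<in> set (Dl n m t)" "Suc (Suc n) \<in> set (Dl n m t)"
    "cycle_of_list (Cl n m t) \<circ> cycle_of_list (Dl n m t) = g3 t"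
    "cycle_of_list (Cl n m t) (Suc n) = Suc (Suc n)"
    "cycle_of_list (Dl n m t) (Suc (Suc n)) = Suc n"
    "cycle_of_list (Cl n m t) (fst (snd t)) = Suc n"
    "cycle_of_list (Dl n m t) (Suc n) = fst (snd t)"
    "cycle_of_list (Cl n m t) (fst t) = snd (snd t)"
    "cycle_of_list (Dl n m t) (snd (snd t)) = n + m"
    "fst t \<noteq> n + m" "g3 t (fst t) = fst (snd t)" "fst t \<noteq> fst (snd t)" "fst (snd t) \<le> n"
proof -
  obtain a b c where t: "t = (a,b,c)" by (cases t) auto
  have h: "distinct [a,b,c]" "a \<in> {1..n}" "b \<in> {1..n}" "c \<in> {1..n}" using assms(1) t by (auto simp: okt_def)
  note L = dC[OF assms(2) h] dD[OF assms(2) h] CD[OF assms(2) h] C_x1[OF assms(2) h] D_x2[OF assms(2) h]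
    C_b[OF assms(2) h] D_x1[OF assms(2) h] C_a[OF assms(2) h] D_c[OF assms(2) h] g3_vals[OF assms(2) h]
  show "distinct (Cl n m t)" "distinct (Dl n m t)" "length (Cl n m t) = m + 3" "length (Dl n m t) = m + 3"
    "set (Cl n m t) \<subseteq> {1..n+m}" "set (Dl n m t) \<subseteq> {1..n+m}"
    "Suc n \<in> set (Cl n m t)" "Suc (Suc n) \<in> set (Cl n m t)"
    "Suc n \<in> set (Dl n m t)" "Suc (Suc n) \<in> set (Dl n m t)"
    using h assms(2) by (auto simp: Cl_def Dl_def t)
  show "cycle_of_list (Cl n m t) \<circ> cycle_of_list (Dl n m t) = g3 t"
    "cycle_of_list (Cl n m t) (Suc n) = Suc (Suc n)"
    "cycle_of_list (Dl n m t) (Suc (Suc n)) = Suc n"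
    "cycle_of_list (Cl n m t) (fst (snd t)) = Suc n"
    "cycle_of_list (Dl n m t) (Suc n) = fst (snd t)"
    "cycle_of_list (Cl n m t) (fst t) = snd (snd t)"
    "cycle_of_list (Dl n m t) (snd (snd t)) = n + m"
    "g3 t (fst t) = fst (snd t)"
    using L unfolding Cl_def Dl_def g3_def t fst_conv snd_conv by (simp_all only:)
  show "fst t \<noteq> n + m" "fst t \<noteq> fst (snd t)" "fst (snd t) \<le> n" using h assms(2) t by auto
qed

lemma foldr_pairs:
  "foldr (\<circ>) (concat (map (\<lambda>t. [f t, g t]) trs)) id = foldr (\<circ>) (map (\<lambda>t. f t \<circ> g t) trs) id"
  by (induct trs) (simp_all add: o_assoc)

lemma distinct_pairs:
  "distinct trs \<Longrightarrow> inj_on f (set trs) \<Longrightarrow> inj_on g (set trs) \<Longrightarrow>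
   (\<forall>t\<in>set trs. \<forall>t'\<in>set trs. f t \<noteq> g t') \<Longrightarrow> distinct (concat (map (\<lambda>t. [f t, g t]) trs))"
proof (induct trs)
  case Nil thus ?case by simp
next
  case (Cons a trs)
  have "distinct (concat (map (\<lambda>t. [f t, g t]) trs))"
    using Cons by (auto intro: inj_on_subset)
  moreover have "f a \<notin> set (concat (map (\<lambda>t. [f t, g t]) trs))"
    using Cons.prems by (auto simp: inj_on_def)
  moreover have "g a \<notin> set (concat (map (\<lambda>t. [f t, g t]) trs))"
    using Cons.prems by (auto simp: inj_on_def)
  moreover have "f a \<noteq> g a" using Cons.prems by auto
  ultimately show ?case by simp
qed

lemma idx_version:
  assumes "distinct ts" "\<forall>x\<in>set ts. \<forall>y\<in>set ts. x \<noteq> y \<longrightarrow> x \<notin> cyc_gen y"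
  shows "\<forall>i < length ts. \<forall>j < length ts. i \<noteq> j \<longrightarrow> ts ! i \<notin> cyc_gen (ts ! j)"
  using assms by (metis nth_eq_iff_index_eq nth_mem)


theorem mainTheorem8:
  fixes n p :: nat and \<sigma> :: "nat \<Rightarrow> nat"
  assumes "prime p" and "p > 3" and "n > 2"
    and "\<sigma> \<in> alt {1..n}"
  shows "\<exists>ts :: (nat \<Rightarrow> nat) list.
           inv \<sigma> = foldr (\<circ>) ts id
         \<and> (\<forall>\<tau> \<in> set ts. is_k_cycle p \<tau> \<and> \<tau> \<in> alt {1..n + (p - 3)} - alt {1..n})
         \<and> (\<forall>i < length ts. \<forall>j < length ts. i \<noteq> j \<longrightarrow> ts ! i \<notin> cyc_gen (ts ! j))"
proof -
  have op: "odd p" using prime_odd_nat[OF assms(1)] assms(2) by simp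
  define m where "m = p - 3"
  have m2: "2 \<le> m" using op assms(2) unfolding m_def by presburger
  have pm: "p = m + 3" using assms(2) unfolding m_def by simp
  have em: "even m" using op pm by simp
  have sp: "\<sigma> permutes {1..n}" "evenperm \<sigma>" using assms(4) by (auto simp: alt_def)
  have ip: "inv \<sigma> permutes {1..n}" by (rule permutes_inv[OF sp(1)])
  have ie: "evenperm (inv \<sigma>)"
    using evenperm_inv[OF permutes_imp_permutation[OF finite_atLeastAtMost sp(1)]] sp(2) by simp
  obtain trs where trs: "inv \<sigma> = foldr (\<circ>) (map g3 trs) id" "\<forall>t\<in>set trs. okt n t"
    "distinct (map (\<lambda>t. fst (snd t)) trs)" using decomp[OF ip ie] by blast
  define C where "C t = cycle_of_list (Cl n m t)" for t
  define D where "D t = cycle_of_list (Dl n m t)" for t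
  define ts where "ts = concat (map (\<lambda>t. [C t, D t]) trs)"
  have ok: "okt n t" if "t \<in> set trs" for t using trs(2) that by blast
  note props = CDprops[OF ok m2]
  have setts: "set ts = C ` set trs \<union> D ` set trs" unfolding ts_def by auto
  have lab: "inj_on (\<lambda>t. fst (snd t)) (set trs)" and dtrs: "distinct trs"
    using trs(3) by (simp_all add: distinct_map)
  have Cinj: "inj (C t)" for t unfolding C_def by (rule permutes_inj[OF cycle_permutes])
  have Dinj: "inj (D t)" for t unfolding D_def by (rule permutes_inj[OF cycle_permutes])
  have prod: "inv \<sigma> = foldr (\<circ>) ts id"
  proof -
    have "foldr (\<circ>) ts id = foldr (\<circ>) (map (\<lambda>t. C t \<circ> D t) trs) id"
      unfolding ts_def by (rule foldr_pairs)
    also have "map (\<lambda>t. C t \<circ> D t) trs = map g3 trs"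
      by (rule map_cong) (use props(11) in \<open>auto simp: C_def D_def\<close>)
    finally have e: "foldr (\<circ>) ts id = foldr (\<circ>) (map g3 trs) id" .
    show ?thesis unfolding e by (rule trs(1))
  qed
  have memb: "\<forall>\<tau>\<in>set ts. is_k_cycle p \<tau> \<and> \<tau> \<in> alt {1..n + (p - 3)} - alt {1..n}"
  proof
    fix \<tau> assume "\<tau> \<in> set ts"
    then obtain t where t: "t \<in> set trs" "\<tau> = C t \<or> \<tau> = D t" using setts by auto
    have nm: "n + (p - 3) = n + m" using m_def by simp
    show "is_k_cycle p \<tau> \<and> \<tau> \<in> alt {1..n + (p - 3)} - alt {1..n}"
      using t(2)
    proof
      assume tc: "\<tau> = C t"
      have k: "is_k_cycle p \<tau>" unfolding is_k_cycle_def tc C_def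
        using props(1,3)[OF t(1)] pm by auto
      have pe: "\<tau> permutes {1..n+m}" unfolding tc C_def
        by (rule permutes_subset[OF cycle_permutes props(5)[OF t(1)]])
      have ev: "evenperm \<tau>" unfolding tc C_def
        using evenperm_cycle[OF props(1)[OF t(1)]] props(3)[OF t(1)] em by simp
      have "\<not> \<tau> permutes {1..n}"
      proof
        assume "\<tau> permutes {1..n}"
        hence "\<tau> (Suc n) = Suc n" by (simp add: permutes_def)
        thus False using props(12)[OF t(1)] tc C_def by simp
      qed
      thus ?thesis using k pe ev nm by (auto simp: alt_def)
    next
      assume tc: "\<tau> = D t"
      have k: "is_k_cycle p \<tau>" unfolding is_k_cycle_def tc D_def
        using props(2,4)[OF t(1)] pm by auto
      have pe: "\<tau> permutes {1..n+m}" unfolding tc D_def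
        by (rule permutes_subset[OF cycle_permutes props(6)[OF t(1)]])
      have ev: "evenperm \<tau>" unfolding tc D_def
        using evenperm_cycle[OF props(2)[OF t(1)]] props(4)[OF t(1)] em by simp
      have "\<not> \<tau> permutes {1..n}"
      proof
        assume "\<tau> permutes {1..n}"
        hence "\<tau> (Suc (Suc n)) = Suc (Suc n)" by (simp add: permutes_def)
        thus False using props(13)[OF t(1)] tc D_def by simp
      qed
      thus ?thesis using k pe ev nm by (auto simp: alt_def)
    qed
  qed
  have Ceq: "t = t'" if "t \<in> set trs" "t' \<in> set trs" "C t = C t'" for t t'
  proof -
    have "C t (fst (snd t)) = C t (fst (snd t'))"
      using props(14)[OF that(1)] props(14)[OF that(2)] that(3) by (simp add: C_def)
    hence "fst (snd t) = fst (snd t')" using Cinj[of t] by (simp add: inj_eq)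
    thus ?thesis using inj_onD[OF lab _ that(1,2)] by simp
  qed
  have Deq: "t = t'" if "t \<in> set trs" "t' \<in> set trs" "D t = D t'" for t t'
  proof -
    have "fst (snd t) = fst (snd t')"
      using props(15)[OF that(1)] props(15)[OF that(2)] that(3) by (simp add: D_def)
    thus ?thesis using inj_onD[OF lab _ that(1,2)] by simp
  qed
  have CD_ne: "C t \<noteq> D t'" if "t \<in> set trs" "t' \<in> set trs" for t t'
  proof
    assume "C t = D t'"
    hence "Suc (Suc n) = fst (snd t')"
      using props(12)[OF that(1)] props(15)[OF that(2)] by (simp add: C_def D_def)
    thus False using props(21)[OF that(2)] by simp
  qed
  have dts: "distinct ts" unfolding ts_def
  proof (rule distinct_pairs[OF dtrs])
    show "inj_on C (set trs)" by (rule inj_onI) (rule Ceq)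
    show "inj_on D (set trs)" by (rule inj_onI) (rule Deq)
    show "\<forall>t\<in>set trs. \<forall>t'\<in>set trs. C t \<noteq> D t'" using CD_ne by blast
  qed
  have DC_id: False if "t \<in> set trs" "t' \<in> set trs" "D t' \<circ> C t = id" for t t'
  proof -
    have "D t' (C t (fst (snd t))) = fst (snd t)" using that(3) by (metis comp_apply id_apply)
    hence "fst (snd t') = fst (snd t)"
      using props(14)[OF that(1)] props(15)[OF that(2)] by (simp add: C_def D_def)
    hence tt: "t = t'" using inj_onD[OF lab _ that(1,2)] by simp
    have "D t (C t (fst t)) = fst t" using that(3) tt by (metis comp_apply id_apply)
    thus False using props(16,17,18)[OF that(1)] by (simp add: C_def D_def)
  qed
  have CD_id: False if "t \<in> set trs" "t' \<in> set trs" "C t' \<circ> D t = id" for t t'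
  proof -
    have "C t' (D t (Suc n)) = Suc n" using that(3) by (metis comp_apply id_apply)
    hence "C t' (fst (snd t)) = C t' (fst (snd t'))"
      using props(14)[OF that(2)] props(15)[OF that(1)] by (simp add: C_def D_def)
    hence "fst (snd t) = fst (snd t')" using Cinj[of t'] by (simp add: inj_eq)
    hence tt: "t = t'" using inj_onD[OF lab _ that(1,2)] by simp
    have "(C t \<circ> D t) (fst t) = fst t" using that(3) tt by simp
    thus False using props(11,19,20)[OF that(1)] by (simp add: C_def D_def)
  qed
  have nonmem: "\<forall>x\<in>set ts. \<forall>y\<in>set ts. x \<noteq> y \<longrightarrow> x \<notin> cyc_gen y"
  proof (intro ballI impI notI)
    fix x y assume xy: "x \<in> set ts" "y \<in> set ts" "x \<noteq> y" "x \<in> cyc_gen y"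
    then obtain k where k: "x = y ^^ k" by (auto simp: cyc_gen_def)
    obtain t where t: "t \<in> set trs" "x = C t \<or> x = D t" using xy(1) setts by auto
    obtain t' where t': "t' \<in> set trs" "y = C t' \<or> y = D t'" using xy(2) setts by auto
    have ne: "Suc n \<noteq> Suc (Suc n)" by simp
    show False
    proof (cases "x = C t")
      case xc: True
      show False
      proof (cases "y = C t'")
        case True
        have "x = y" by (rule P1[OF props(1)[OF t'(1)] props(8)[OF t'(1)], of y "Suc n" x k])
          (use True xc props(12)[OF t'(1)] props(12)[OF t(1)] k in \<open>auto simp: C_def\<close>)
        thus False using xy(3) by simp
      next
        case False
        hence yd: "y = D t'" using t' by auto
        have "y \<circ> x = id" by (rule P2[OF props(2)[OF t'(1)] props(9)[OF t'(1)], of y "Suc (Suc n)" x k])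
          (use yd xc props(13)[OF t'(1)] props(12)[OF t(1)] k in \<open>auto simp: C_def D_def\<close>)
        thus False using DC_id[OF t(1) t'(1)] yd xc by simp
      qed
    next
      case False
      hence xd: "x = D t" using t by auto
      show False
      proof (cases "y = C t'")
        case yc: True
        have "y \<circ> x = id" by (rule P2[OF props(1)[OF t'(1)] props(8)[OF t'(1)], of y "Suc n" x k])
          (use yc xd props(12)[OF t'(1)] props(13)[OF t(1)] k in \<open>auto simp: C_def D_def\<close>)
        thus False using CD_id[OF t(1) t'(1)] yc xd by simp
      next
        case False
        hence yd: "y = D t'" using t' by auto
        have "x = y" by (rule P1[OF props(2)[OF t'(1)] props(9)[OF t'(1)], of y "Suc (Suc n)" x k])
          (use yd xd props(13)[OF t'(1)] props(13)[OF t(1)] k in \<open>auto simp: D_def\<close>)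
        thus False using xy(3) by simp
      qed
    qed
  qed
  show ?thesis using prod memb idx_version[OF dts nonmem] by blast
qed

end
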